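(* Let $\mathcal{R}=\{f_1,\dots,f_m\}$ be the set of area inequalities of a Lagrangian diagram with crossings $q_1,\dots,q_n$, each $f_i$ of the form $\sum_{j=1}^n\alpha_{i,j}h(q_j)>0$ with $\alpha_{i,j}\in\{-2,-1,0,1,2\}$. Suppose the flooding algorithm succeeds, producing tiers $T_1,\dots,T_M$. Define integers $h_M=1$ and $h_k=1+\sum_{i=k+1}^M 2h_i|T_i|$ for $k=M-1,\dots,1$. Then assigning height $h(q)=h_k$ to each crossing $q\in T_k$, for $1\le k\le M$, gives a valid height assignment for the Lagrangian diagram, i.e. all inequalities in $\mathcal{R}$ are satisfied.
   Context: For a Lagrangian diagram (knot diagram planar isotopic to the Lagrangian projection $(x,y,z)\mapsto(x,y)$ of a Legendrian knot in $(\mathbb{R}^3, dz-y\,dx)$), an area patch is a bounded component of the complement of the diagram. Traversing the boundary of a patch $P$ with the boundary orientation, a corner where one passes from an understrand to an overstrand gets positive Reeb sign, other corners negative Reeb sign. The area inequality of $P$ is: the sum over corners of $P$ of (Reeb sign)$\cdot h(\text{crossing})$ is $>0$ (a crossing may appear with multiplicity, hence coefficients in $\{-2,\dots,2\}$); these form $\mathcal{R}$. Flooding algorithm: start with $\mathcal{R}'=\mathcal{R}$ and $k=1$. (i) Let $T_k=\{q_j:\alpha_{i,j}\ge0$ for every $f_i\in\mathcal{R}'\}$ among crossings not yet assigned to a tier. (ii) If $T_k=\emptyset$ the algorithm fails; otherwise, for each $q_j\in T_k$ remove from $\mathcal{R}'$ every $f_i$ with $\alpha_{i,j}>0$. (iii)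 If $\mathcal{R}'\ne\emptyset$, increase $k$ by one and return to (i); if $\mathcal{R}'=\emptyset$, let $T_{k+1}$ be the set of crossings in no earlier tier and $M=k+1$; the algorithm succeeds. The tiers partition $\{q_1,\dots,q_n\}$, and $|T_i|$ denotes the cardinality of $T_i$. *)

theory Defs
  imports Main
begin

text \<open>Area inequalities are given by a coefficient matrix alpha: inequality i (i < m)
  reads  sum over j < n of alpha i j * h(q_j) > 0.  Crossings are indexed by j < n,
  inequalities by i < m.\<close>

definition flood_tier :: "(nat \<Rightarrow> nat \<Rightarrow> int) \<Rightarrow> nat \<Rightarrow> nat set \<Rightarrow> nat set \<Rightarrow> nat set" where
  "flood_tier \<alpha> n Rr A = {j. j < n \<and> j \<notin> A \<and> (\<forall>i\<in>Rr. 0 \<le> \<alpha> i j)}"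

definition flood_remove :: "(nat \<Rightarrow> nat \<Rightarrow> int) \<Rightarrow> nat set \<Rightarrow> nat set \<Rightarrow> nat set" where
  "flood_remove \<alpha> Rr T = Rr - {i. \<exists>j\<in>T. 0 < \<alpha> i j}"

inductive flood_run :: "(nat \<Rightarrow> nat \<Rightarrow> int) \<Rightarrow> nat \<Rightarrow> nat set \<Rightarrow> nat set \<Rightarrow> nat set list \<Rightarrow> bool"
  for \<alpha> :: "nat \<Rightarrow> nat \<Rightarrow> int" and n :: nat where
  finish: "\<lbrakk> flood_tier \<alpha> n Rr A \<noteq> {};
             flood_remove \<alpha> Rr (flood_tier \<alpha> n Rr A) = {} \<rbrakk>
           \<Longrightarrow> flood_run \<alpha> n Rr A
                 [flood_tier \<alpha> n Rr A, {j. j < n \<and> j \<notin> A \<union> flood_tier \<alpha> n Rr A}]"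
| step: "\<lbrakk> flood_tier \<alpha> n Rr A \<noteq> {};
           flood_remove \<alpha> Rr (flood_tier \<alpha> n Rr A) \<noteq> {};
           flood_run \<alpha> n (flood_remove \<alpha> Rr (flood_tier \<alpha> n Rr A)) (A \<union> flood_tier \<alpha> n Rr A) Ts \<rbrakk>
         \<Longrightarrow> flood_run \<alpha> n Rr A (flood_tier \<alpha> n Rr A # Ts)"

text \<open>The flooding algorithm for m inequalities and n crossings succeeds with tiers Ts
  (Ts ! k is the paper's T_(k+1); length Ts is the paper's M).\<close>
definition flooding_succeeds :: "(nat \<Rightarrow> nat \<Rightarrow> int) \<Rightarrow> nat \<Rightarrow> nat \<Rightarrow> nat set list \<Rightarrow> bool" where
  "flooding_succeeds \<alpha> m n Ts \<longleftrightarrow> flood_run \<alpha> n {..<m} {} Ts"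

text \<open>Tier heights (0-based index k, paper's h_(k+1)):
  last tier gets 1, and h_k = 1 + sum_{i>k} 2 h_i |T_i|.\<close>
function tier_height :: "nat set list \<Rightarrow> nat \<Rightarrow> int" where
  "tier_height Ts k =
     (if length Ts \<le> Suc k then 1
      else 1 + (\<Sum>i\<in>{Suc k..<length Ts}. 2 * tier_height Ts i * int (card (Ts ! i))))"
  by auto
termination
  by (relation "measure (\<lambda>(Ts, k). length Ts - k)") auto

end

theory Submission
  imports Defs
begin

lemma tier_height_pos: "tier_height Ts k \<ge> 1"
proof (induction Ts k rule: tier_height.induct)
  case (1 Ts k)
  have "(\<Sum>i\<in>{Suc k..<length Ts}. 2 * tier_height Ts i * int (card (Ts ! i))) \<ge> 0"
    if "\<not> length Ts \<le> Suc k"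
  proof (intro sum_nonneg)
    fix x assume x: "x \<in> {Suc k..<length Ts}"
    have "tier_height Ts x \<ge> 1" using 1[OF that x] .
    then show "0 \<le> 2 * tier_height Ts x * int (card (Ts ! x))" by (simp del: tier_height.simps)
  qed
  then show ?case by (subst tier_height.simps) auto
qed

declare tier_height.simps[simp del]

lemma run_props:
  assumes "flood_run \<alpha> n Rr A Ts"
  shows "length Ts \<ge> 2 \<and> (\<forall>l<length Ts. Ts!l \<subseteq> {..<n} - A)
    \<and> (\<forall>a b. a < b \<and> b < length Ts \<longrightarrow> Ts!a \<inter> Ts!b = {})
    \<and> (\<forall>j<n. j \<notin> A \<longrightarrow> (\<exists>l<length Ts. j \<in> Ts!l))
    \<and> (\<forall>i\<in>Rr. \<exists>k. Suc k < length Ts \<and> (\<exists>j\<in>Ts!k. 0 < \<alpha> i j)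
          \<and> (\<forall>l\<le>k. \<forall>j\<in>Ts!l. 0 \<le> \<alpha> i j))"
  using assms
proof (induction rule: flood_run.induct)
  case (finish Rr A)
  let ?T = "flood_tier \<alpha> n Rr A"
  have a: "length [?T, {j. j < n \<and> j \<notin> A \<union> ?T}] \<ge> 2" by simp
  have b: "\<forall>l<2. [?T, {j. j < n \<and> j \<notin> A \<union> ?T}]!l \<subseteq> {..<n} - A"
    by (auto simp: less_Suc_eq numeral_2_eq_2 flood_tier_def)
  have c: "\<forall>a b. a < b \<and> b < 2 \<longrightarrow> [?T, {j. j < n \<and> j \<notin> A \<union> ?T}]!a \<inter> [?T, {j. j < n \<and> j \<notin> A \<union> ?T}]!b = {}"
  proof (intro allI impI)
    fix a b :: nat assume "a < b \<and> b < 2"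
    then have "a = 0" "b = 1" by auto
    then show "[?T, {j. j < n \<and> j \<notin> A \<union> ?T}]!a \<inter> [?T, {j. j < n \<and> j \<notin> A \<union> ?T}]!b = {}" by auto
  qed
  have d: "\<forall>j<n. j \<notin> A \<longrightarrow> (\<exists>l<2. j \<in> [?T, {j. j < n \<and> j \<notin> A \<union> ?T}]!l)"
  proof (intro allI impI)
    fix j assume j: "j < n" "j \<notin> A"
    show "\<exists>l<2. j \<in> [?T, {j. j < n \<and> j \<notin> A \<union> ?T}]!l"
    proof (cases "j \<in> ?T")
      case True then show ?thesis by (intro exI[of _ 0]) auto
    next
      case False then show ?thesis using j by (intro exI[of _ 1]) auto
    qed
  qed
  have e: "\<forall>i\<in>Rr. \<exists>k. Suc k < 2 \<and> (\<exists>j\<in>[?T, {j. j < n \<and> j \<notin> A \<union> ?T}]!k. 0 < \<alpha> i j)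
          \<and> (\<forall>l\<le>k. \<forall>j\<in>[?T, {j. j < n \<and> j \<notin> A \<union> ?T}]!l. 0 \<le> \<alpha> i j)"
  proof
    fix i assume i: "i \<in> Rr"
    then have "\<exists>j\<in>?T. 0 < \<alpha> i j" using finish(2) unfolding flood_remove_def by blast
    moreover have "\<forall>j\<in>?T. 0 \<le> \<alpha> i j" using i unfolding flood_tier_def by blast
    ultimately show "\<exists>k. Suc k < 2 \<and> (\<exists>j\<in>[?T, {j. j < n \<and> j \<notin> A \<union> ?T}]!k. 0 < \<alpha> i j)
          \<and> (\<forall>l\<le>k. \<forall>j\<in>[?T, {j. j < n \<and> j \<notin> A \<union> ?T}]!l. 0 \<le> \<alpha> i j)"
      by (intro exI[of _ 0]) auto
  qed
  have L: "length [?T, {j. j < n \<and> j \<notin> A \<union> ?T}] = 2" by simp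
  show ?case unfolding L by (intro conjI order_refl b c d e)
next
  case (step Rr A Ts)
  let ?T = "flood_tier \<alpha> n Rr A"
  let ?R = "flood_remove \<alpha> Rr ?T"
  note IH = step(4)
  have a: "length (?T # Ts) \<ge> 2" using IH by simp
  have b: "\<forall>l<length (?T # Ts). (?T # Ts)!l \<subseteq> {..<n} - A"
  proof (intro allI impI)
    fix l assume "l < length (?T # Ts)"
    then show "(?T # Ts)!l \<subseteq> {..<n} - A"
      using IH by (cases l) (auto simp: flood_tier_def)
  qed
  have c: "\<forall>a b. a < b \<and> b < length (?T # Ts) \<longrightarrow> (?T # Ts)!a \<inter> (?T # Ts)!b = {}"
  proof (intro allI impI)
    fix a b assume ab: "a < b \<and> b < length (?T # Ts)"
    then obtain b' where b': "b = Suc b'" "b' < length Ts" by (cases b) auto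
    show "(?T # Ts)!a \<inter> (?T # Ts)!b = {}"
    proof (cases a)
      case 0
      then show ?thesis using IH b' by auto
    next
      case (Suc a')
      then show ?thesis using IH b' ab by auto
    qed
  qed
  have d: "\<forall>j<n. j \<notin> A \<longrightarrow> (\<exists>l<length (?T # Ts). j \<in> (?T # Ts)!l)"
  proof (intro allI impI)
    fix j assume j: "j < n" "j \<notin> A"
    show "\<exists>l<length (?T # Ts). j \<in> (?T # Ts)!l"
    proof (cases "j \<in> ?T")
      case True then show ?thesis by (intro exI[of _ 0]) auto
    next
      case False
      then obtain l where "l < length Ts" "j \<in> Ts!l" using IH j by auto
      then show ?thesis by (intro exI[of _ "Suc l"]) auto
    qed
  qed
  have e: "\<forall>i\<in>Rr. \<exists>k. Suc k < length (?T # Ts) \<and> (\<exists>j\<in>(?T # Ts)!k. 0 < \<alpha> i j)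
          \<and> (\<forall>l\<le>k. \<forall>j\<in>(?T # Ts)!l. 0 \<le> \<alpha> i j)"
  proof
    fix i assume i: "i \<in> Rr"
    have T0: "\<forall>j\<in>?T. 0 \<le> \<alpha> i j" using i unfolding flood_tier_def by blast
    show "\<exists>k. Suc k < length (?T # Ts) \<and> (\<exists>j\<in>(?T # Ts)!k. 0 < \<alpha> i j)
          \<and> (\<forall>l\<le>k. \<forall>j\<in>(?T # Ts)!l. 0 \<le> \<alpha> i j)"
    proof (cases "i \<in> ?R")
      case True
      then obtain k where k: "Suc k < length Ts" "\<exists>j\<in>Ts!k. 0 < \<alpha> i j"
        "\<forall>l\<le>k. \<forall>j\<in>Ts!l. 0 \<le> \<alpha> i j" using IH by blast
      have "\<forall>l\<le>Suc k. \<forall>j\<in>(?T # Ts)!l. 0 \<le> \<alpha> i j"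
      proof (intro allI impI ballI)
        fix l j assume "l \<le> Suc k" "j \<in> (?T # Ts)!l"
        then show "0 \<le> \<alpha> i j" using T0 k(3) by (cases l) auto
      qed
      then show ?thesis using k by (intro exI[of _ "Suc k"]) auto
    next
      case False
      then have "\<exists>j\<in>?T. 0 < \<alpha> i j" using i unfolding flood_remove_def by blast
      then show ?thesis using T0 a by (intro exI[of _ 0]) auto
    qed
  qed
  show ?case using a b c d e by blast
qed

theorem proposition5p1:
  fixes \<alpha> :: "nat \<Rightarrow> nat \<Rightarrow> int" and m n :: nat and Ts :: "nat set list"
    and h :: "nat \<Rightarrow> int"
  assumes coeffs: "\<forall>i<m. \<forall>j<n. \<alpha> i j \<in> {-2..2}"
    and succ: "flooding_succeeds \<alpha> m n Ts"
    and heights: "\<forall>k<length Ts. \<forall>j\<in>Ts ! k. h j = tier_height Ts k"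
  shows "\<forall>i<m. (\<Sum>j<n. \<alpha> i j * h j) > 0"
proof (intro allI impI)
  fix i assume im: "i < m"
  let ?L = "length Ts"
  have P: "length Ts \<ge> 2 \<and> (\<forall>l<length Ts. Ts!l \<subseteq> {..<n} - {})
    \<and> (\<forall>a b. a < b \<and> b < length Ts \<longrightarrow> Ts!a \<inter> Ts!b = {})
    \<and> (\<forall>j<n. j \<notin> {} \<longrightarrow> (\<exists>l<length Ts. j \<in> Ts!l))
    \<and> (\<forall>i\<in>{..<m}. \<exists>k. Suc k < length Ts \<and> (\<exists>j\<in>Ts!k. 0 < \<alpha> i j)
          \<and> (\<forall>l\<le>k. \<forall>j\<in>Ts!l. 0 \<le> \<alpha> i j))"
    using run_props[OF succ[unfolded flooding_succeeds_def]] .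
  have sub0: "\<forall>l<length Ts. Ts!l \<subseteq> {..<n} - {}" using P by (elim conjE) assumption
  have D: "\<forall>a b. a < b \<and> b < length Ts \<longrightarrow> Ts!a \<inter> Ts!b = {}" using P by (elim conjE) assumption
  have C: "\<forall>j<n. j \<notin> {} \<longrightarrow> (\<exists>l<length Ts. j \<in> Ts!l)" using P by (elim conjE) assumption
  have E: "\<forall>i\<in>{..<m}. \<exists>k. Suc k < length Ts \<and> (\<exists>j\<in>Ts!k. 0 < \<alpha> i j)
          \<and> (\<forall>l\<le>k. \<forall>j\<in>Ts!l. 0 \<le> \<alpha> i j)" using P by (elim conjE) assumption
  have sub: "\<And>l. l < ?L \<Longrightarrow> Ts!l \<subseteq> {..<n}" using sub0 by simp
  have disj: "\<And>a b. a < ?L \<Longrightarrow> b < ?L \<Longrightarrow> a \<noteq> b \<Longrightarrow> Ts!a \<inter> Ts!b = {}"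
  proof -
    fix a b assume ab: "a < ?L" "b < ?L" "a \<noteq> b"
    show "Ts!a \<inter> Ts!b = {}"
    proof (cases "a < b")
      case True then show ?thesis using D ab by blast
    next
      case False then have "b < a" using ab by simp
      then have "Ts!b \<inter> Ts!a = {}" using D ab by blast
      then show ?thesis by (simp add: Int_commute)
    qed
  qed
  have cov: "\<And>j. j < n \<Longrightarrow> \<exists>l<?L. j \<in> Ts!l" using C by simp
  have "\<exists>k. Suc k < length Ts \<and> (\<exists>j\<in>Ts!k. 0 < \<alpha> i j)
          \<and> (\<forall>l\<le>k. \<forall>j\<in>Ts!l. 0 \<le> \<alpha> i j)" using E im by simp
  then obtain k where kk: "Suc k < ?L" "\<exists>j\<in>Ts!k. 0 < \<alpha> i j"
    "\<forall>l\<le>k. \<forall>j\<in>Ts!l. 0 \<le> \<alpha> i j" by blast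
  from kk(2) obtain j0 where j0: "j0 \<in> Ts!k" "0 < \<alpha> i j0" by blast
  have k: "Suc k < ?L" "j0 \<in> Ts!k" "0 < \<alpha> i j0" "\<forall>l\<le>k. \<forall>j\<in>Ts!l. 0 \<le> \<alpha> i j"
    using kk j0 by auto
  have hpos: "\<And>j. j < n \<Longrightarrow> h j \<ge> 1"
  proof -
    fix j assume "j < n"
    then obtain l where "l < ?L" "j \<in> Ts!l" using cov by blast
    then have "h j = tier_height Ts l" using heights by blast
    then show "h j \<ge> 1" using tier_height_pos[of Ts l] by simp
  qed
  define S1 where "S1 = {j. j < n \<and> (\<exists>l\<le>k. j \<in> Ts!l)}"
  define S2 where "S2 = (\<Union>l\<in>{Suc k..<?L}. Ts!l)"
  have S2eq: "S2 = {..<n} - S1"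
  proof
    show "S2 \<subseteq> {..<n} - S1"
    proof
      fix j assume "j \<in> S2"
      then obtain l where l: "Suc k \<le> l" "l < ?L" "j \<in> Ts!l" unfolding S2_def by auto
      have "j < n" using sub l by auto
      moreover have "j \<notin> S1"
      proof
        assume "j \<in> S1"
        then obtain l' where "l' \<le> k" "j \<in> Ts!l'" unfolding S1_def by auto
        then show False using disj[of l l'] l by auto
      qed
      ultimately show "j \<in> {..<n} - S1" by auto
    qed
  next
    show "{..<n} - S1 \<subseteq> S2"
    proof
      fix j assume j: "j \<in> {..<n} - S1"
      then obtain l where l: "l < ?L" "j \<in> Ts!l" using cov by auto
      have "\<not> l \<le> k" using j l unfolding S1_def by auto
      then show "j \<in> S2" unfolding S2_def using l by auto
    qed
  qed
  have S1sub: "S1 \<subseteq> {..<n}" unfolding S1_def by auto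
  have split: "(\<Sum>j<n. \<alpha> i j * h j) = (\<Sum>j\<in>S1. \<alpha> i j * h j) + (\<Sum>j\<in>S2. \<alpha> i j * h j)"
    unfolding S2eq using S1sub by (simp add: sum.subset_diff)
  have j0S1: "j0 \<in> S1" unfolding S1_def using k sub[of k] by auto
  have hk: "h j0 = tier_height Ts k" using heights k by auto
  have nn: "\<forall>j\<in>S1. 0 \<le> \<alpha> i j * h j"
  proof
    fix j assume "j \<in> S1"
    then obtain l where "j < n" "l \<le> k" "j \<in> Ts!l" unfolding S1_def by blast
    then have "0 \<le> \<alpha> i j" "1 \<le> h j" using k(4) hpos by auto
    then show "0 \<le> \<alpha> i j * h j" by simp
  qed
  have "\<alpha> i j0 * h j0 \<le> (\<Sum>j\<in>S1. \<alpha> i j * h j)"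
  proof (rule member_le_sum[of j0 S1 "\<lambda>j. \<alpha> i j * h j"])
    show "j0 \<in> S1" by (rule j0S1)
    show "finite S1" using S1sub finite_subset by blast
    fix x assume "x \<in> S1 - {j0}" then show "0 \<le> \<alpha> i x * h x" using nn by blast
  qed
  moreover have "tier_height Ts k \<le> \<alpha> i j0 * h j0"
    using hk k(3) tier_height_pos[of Ts k] by (simp add: mult_le_cancel_right1 ) 
  ultimately have s1: "tier_height Ts k \<le> (\<Sum>j\<in>S1. \<alpha> i j * h j)" by linarith
  have S2sub: "S2 \<subseteq> {..<n}" unfolding S2eq by auto
  have "(\<Sum>j\<in>S2. (-2) * h j) \<le> (\<Sum>j\<in>S2. \<alpha> i j * h j)"
  proof (rule sum_mono)
    fix j assume "j \<in> S2"
    then have "j < n" using S2sub by auto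
    then have "-2 \<le> \<alpha> i j" "h j \<ge> 1" using coeffs im hpos by auto
    then show "(-2) * h j \<le> \<alpha> i j * h j" using mult_right_mono[of "-2" "\<alpha> i j" "h j"] by simp
  qed
  moreover have "(\<Sum>j\<in>S2. h j) = (\<Sum>l\<in>{Suc k..<?L}. (\<Sum>j\<in>Ts!l. h j))"
    unfolding S2_def
  proof (rule sum.UNION_disjoint)
    show "finite {Suc k..<?L}" by simp
    show "\<forall>l\<in>{Suc k..<?L}. finite (Ts!l)"
      using sub by (meson atLeastLessThan_iff finite_lessThan finite_subset)
    show "\<forall>a\<in>{Suc k..<?L}. \<forall>b\<in>{Suc k..<?L}. a \<noteq> b \<longrightarrow> Ts!a \<inter> Ts!b = {}"
      using disj by auto
  qed
  moreover have "(\<Sum>l\<in>{Suc k..<?L}. (\<Sum>j\<in>Ts!l. h j)) = (\<Sum>l\<in>{Suc k..<?L}. tier_height Ts l * int (card (Ts!l)))"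
    using heights by (intro sum.cong) auto
  moreover have "tier_height Ts k = 1 + (\<Sum>l\<in>{Suc k..<?L}. 2 * tier_height Ts l * int (card (Ts!l)))"
    using k(1) by (subst tier_height.simps) simp
  ultimately have s2: "(\<Sum>j\<in>S2. \<alpha> i j * h j) \<ge> 1 - tier_height Ts k"
    by (simp add: sum_negf sum_distrib_left[symmetric] mult.assoc)
  show "(\<Sum>j<n. \<alpha> i j * h j) > 0" using split s1 s2 by linarith
qed

end
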